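(* Let $B_1$ and $B_2$ be finite Blaschke products of degrees $M$ and $N$ respectively, and let $0<r<1$. If $|B_1(z)|=|B_2(z)|$ for more than $2N+2M-1$ distinct points $z\in r\mathbb{T}$, then $B_2$ is a constant multiple of $B_1$.
   Context: $r\mathbb{T}=\{z\in\mathbb{C}:|z|=r\}$. A finite Blaschke product of degree $M$ is a function $c\prod_{j=1}^M\frac{z-\alpha_j}{1-\overline{\alpha_j}z}$ with $|c|=1$ and $\alpha_j$ in the open unit disc. *)

theory Defs
  imports "HOL-Analysis.Analysis"
begin

text \<open>Finite Blaschke product with unimodular constant c and zeros listed (with multiplicity)
  in the list as; its degree is the length of the list.\<close>
definition blaschke :: "complex \<Rightarrow> complex list \<Rightarrow> complex \<Rightarrow> complex" where
  "blaschke c as z = c * (\<Prod>a\<leftarrow>as. (z - a) / (1 - cnj a * z))"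

definition is_blaschke :: "nat \<Rightarrow> (complex \<Rightarrow> complex) \<Rightarrow> bool" where
  "is_blaschke M B \<longleftrightarrow> (\<exists>c as. norm c = 1 \<and> length as = M \<and> (\<forall>a\<in>set as. norm a < 1)
      \<and> B = blaschke c as)"

end

theory Submission imports Defs "HOL-Computational_Algebra.Polynomial" begin

lemma coeff_mult_bound:
  fixes p q :: "'a::comm_ring_1 poly"
  assumes "degree p \<le> m" "degree q \<le> n"
  shows "coeff (p*q) (m+n) = coeff p m * coeff q n"
proof -
  have "coeff (p*q) (m+n) = (\<Sum>i\<le>m+n. coeff p i * coeff q (m+n-i))" by (rule coeff_mult)
  also have "\<dots> = coeff p m * coeff q (m+n-m) + (\<Sum>i\<in>{..m+n}-{m}. coeff p i * coeff q (m+n-i))"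
    by (subst sum.remove[of _ m]) auto
  also have "(\<Sum>i\<in>{..m+n}-{m}. coeff p i * coeff q (m+n-i)) = 0"
  proof (rule sum.neutral, rule ballI)
    fix i assume "i \<in> {..m+n}-{m}"
    then have "i \<noteq> m" by simp
    show "coeff p i * coeff q (m+n-i) = 0"
    proof (cases "i > m")
      case True then show ?thesis using assms by (simp add: coeff_eq_0)
    next
      case False then have "m+n-i > n" using \<open>i\<noteq>m\<close> by simp
      then show ?thesis using assms by (simp add: coeff_eq_0)
    qed
  qed
  finally show ?thesis by simp
qed

definition pa :: "real \<Rightarrow> complex \<Rightarrow> complex poly" where
  "pa r a = [:-a, 1:] * [:complex_of_real (r^2), -cnj a:]"
definition qa :: "real \<Rightarrow> complex \<Rightarrow> complex poly" where
  "qa r a = [:1, -cnj a:] * [:-(a * complex_of_real (r^2)), 1:]"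

definition PP where "PP r as = prod_list (map (pa r) as)"
definition QQ where "QQ r as = prod_list (map (qa r) as)"

lemma pa_deg: "degree (pa r a) \<le> 2" "coeff (pa r a) 2 = - cnj a"
  unfolding pa_def by (auto simp: degree_mult_le[THEN order_trans] numeral_2_eq_2 coeff_mult)
lemma qa_deg: "degree (qa r a) \<le> 2" "coeff (qa r a) 2 = - cnj a"
  unfolding qa_def by (auto simp: degree_mult_le[THEN order_trans] numeral_2_eq_2 coeff_mult)

lemma PP_deg: "degree (PP r as) \<le> 2 * length as \<and> coeff (PP r as) (2 * length as) = (\<Prod>a\<leftarrow>as. - cnj a)"
proof (induction as)
  case Nil then show ?case by (simp add: PP_def)
next
  case (Cons a as)
  have e: "PP r (a#as) = pa r a * PP r as" by (simp add: PP_def)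
  have "degree (PP r (a#as)) \<le> 2 + 2 * length as"
    unfolding e using Cons pa_deg(1)[of r a] by (meson add_mono degree_mult_le order_trans)
  moreover have "coeff (PP r (a#as)) (2 + 2 * length as) = (\<Prod>a\<leftarrow>a#as. - cnj a)"
    unfolding e using coeff_mult_bound[OF pa_deg(1)[of r a] conjunct1[OF Cons]] Cons pa_deg(2)[of r a] by simp
  ultimately show ?case by simp
qed

lemma QQ_deg: "degree (QQ r as) \<le> 2 * length as \<and> coeff (QQ r as) (2 * length as) = (\<Prod>a\<leftarrow>as. - cnj a)"
proof (induction as)
  case Nil then show ?case by (simp add: QQ_def)
next
  case (Cons a as)
  have e: "QQ r (a#as) = qa r a * QQ r as" by (simp add: QQ_def)
  have "degree (QQ r (a#as)) \<le> 2 + 2 * length as"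
    unfolding e using Cons qa_deg(1)[of r a] by (meson add_mono degree_mult_le order_trans)
  moreover have "coeff (QQ r (a#as)) (2 + 2 * length as) = (\<Prod>a\<leftarrow>a#as. - cnj a)"
    unfolding e using coeff_mult_bound[OF qa_deg(1)[of r a] conjunct1[OF Cons]] Cons qa_deg(2)[of r a] by simp
  ultimately show ?case by simp
qed

lemma qa_nz:
  assumes "norm z = r" "0 < r" "r < 1" "norm a < 1"
  shows "poly (qa r a) z \<noteq> 0"
proof -
  have "norm (cnj a * z) < 1" proof -
    have "norm a * r < 1 * 1" using assms by (intro mult_strict_mono') auto
    then show ?thesis using assms by (simp add: norm_mult)
  qed
  then have h1: "1 - cnj a * z \<noteq> 0" by auto
  have "norm (a * complex_of_real (r^2)) < r" proof -
    have "norm a * r < 1 * 1" using assms by (intro mult_strict_mono') auto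
    then have "(norm a * r) * r < 1 * r" using assms by (intro mult_strict_right_mono) auto
    then show ?thesis using assms by (simp add: norm_mult power2_eq_square mult.assoc)
  qed
  then have h2: "z - a * complex_of_real (r^2) \<noteq> 0" using assms by auto
  have "poly (qa r a) z = (1 - cnj a * z) * (z - a * complex_of_real (r^2))" by (simp add: qa_def algebra_simps)
  then show ?thesis using h1 h2 by simp
qed

lemma rfrac: "(z::complex) \<noteq> 0 \<Longrightarrow> z - a * R \<noteq> 0 \<Longrightarrow> (R/z - ca)/(1 - a*(R/z)) = (R - ca*z)/(z - a*R)"
  by (simp add: field_simps)

lemma factor_norm:
  assumes "norm z = r" "0 < r" "r < 1" "norm a < 1"
  shows "complex_of_real ((norm ((z-a)/(1-cnj a*z)))^2) = poly (pa r a) z / poly (qa r a) z"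
proof -
  have z0: "z \<noteq> 0" using assms by auto
  have cz: "cnj z = complex_of_real (r^2) / z"
    using z0 assms complex_norm_square[of z] by (simp add: field_simps)
  have "norm (cnj a * z) < 1" proof -
    have "norm a * r < 1 * 1" using assms by (intro mult_strict_mono') auto
    then show ?thesis using assms by (simp add: norm_mult)
  qed
  then have h1: "1 - cnj a * z \<noteq> 0" by auto
  have "norm (a * complex_of_real (r^2)) < r" proof -
    have "norm a * r < 1 * 1" using assms by (intro mult_strict_mono') auto
    then have "(norm a * r) * r < 1 * r" using assms by (intro mult_strict_right_mono) auto
    then show ?thesis using assms by (simp add: norm_mult power2_eq_square mult.assoc)
  qed
  then have h2: "z - a * complex_of_real (r^2) \<noteq> 0" using assms by auto
  have "complex_of_real ((norm ((z-a)/(1-cnj a*z)))^2) = ((z-a)/(1-cnj a*z)) * cnj ((z-a)/(1-cnj a*z))"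
    by (rule complex_norm_square)
  also have "\<dots> = ((z-a)/(1-cnj a*z)) * ((cnj z - cnj a)/(1 - a * cnj z))" by simp
  also have "\<dots> = ((z-a)/(1-cnj a*z)) * ((complex_of_real (r^2) / z - cnj a)/(1 - a * (complex_of_real (r^2) / z)))"
    by (simp add: cz)
  also have "\<dots> = ((z-a)/(1-cnj a*z)) * ((complex_of_real (r^2) - cnj a * z)/(z - a * complex_of_real (r^2)))"
    by (subst rfrac[OF z0 h2]) (rule refl)
  also have "\<dots> = ((z-a) * (complex_of_real (r^2) - cnj a * z)) / ((1-cnj a*z) * (z - a * complex_of_real (r^2)))"
    by (rule times_divide_times_eq)
  also have "\<dots> = poly (pa r a) z / poly (qa r a) z"
  proof -
    have "poly (qa r a) z = (1 - cnj a * z) * (z - a * complex_of_real (r^2))" by (simp add: qa_def algebra_simps)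
    moreover have "poly (pa r a) z = (z-a) * (complex_of_real (r^2) - cnj a * z)" by (simp add: pa_def algebra_simps)
    ultimately show ?thesis by simp
  qed
  finally show ?thesis .
qed

lemma blaschke_norm:
  assumes "norm z = r" "0 < r" "r < 1" "\<forall>a\<in>set as. norm a < 1" "norm c = 1"
  shows "complex_of_real ((norm (blaschke c as z))^2) = poly (PP r as) z / poly (QQ r as) z
     \<and> poly (QQ r as) z \<noteq> 0"
  using assms(4)
proof (induction as)
  case Nil then show ?case using assms by (simp add: blaschke_def PP_def QQ_def)
next
  case (Cons a as)
  have b: "blaschke c (a#as) z = (z-a)/(1-cnj a*z) * blaschke c as z"
    by (simp add: blaschke_def)
  have "complex_of_real ((norm (blaschke c (a#as) z))^2) = 
     complex_of_real ((norm ((z-a)/(1-cnj a*z)))^2) * complex_of_real ((norm (blaschke c as z))^2)"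
  proof -
    have "norm (blaschke c (a#as) z) ^2 = norm ((z-a)/(1-cnj a*z))^2 * norm (blaschke c as z)^2"
      unfolding b by (simp add: norm_mult norm_divide power_mult_distrib power_divide)
    then show ?thesis by (simp only: of_real_mult)
  qed
  also have "\<dots> = poly (pa r a) z / poly (qa r a) z * (poly (PP r as) z / poly (QQ r as) z)"
    using Cons factor_norm[OF assms(1-3)] by simp
  also have "\<dots> = poly (PP r (a#as)) z / poly (QQ r (a#as)) z"
    by (simp add: PP_def QQ_def)
  finally show ?case using Cons qa_nz[OF assms(1-3)] by (simp add: QQ_def)
qed

lemma order_lin: "order y [:-a, 1:] = (if y = a then 1 else 0)"
proof (cases "y = a")
  case True then show ?thesis using order_power_n_n[of a 1] by simp
next
  case False then have "poly [:-a, 1:] y \<noteq> 0" by simp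
  then have "order y [:-a, 1:] = 0" by (rule order_0I)
  then show ?thesis using False by simp
qed

lemma pa_nz: "r \<noteq> 0 \<Longrightarrow> pa r a \<noteq> 0" unfolding pa_def mult_eq_0_iff by auto
lemma qa_nz': "qa r a \<noteq> 0" unfolding qa_def mult_eq_0_iff by auto
lemma PP_nz: "r \<noteq> 0 \<Longrightarrow> PP r as \<noteq> 0"
  by (induction as) (simp_all add: PP_def pa_nz)
lemma QQ_nz: "QQ r as \<noteq> 0"
  by (induction as) (simp_all add: QQ_def qa_nz')

lemma small_nz:
  assumes "norm a < 1" "norm y < r^2" "0 < r" "r < 1"
  shows "complex_of_real (r^2) - cnj a * y \<noteq> 0" "1 - cnj a * y \<noteq> 0"
proof -
  have "norm a * norm y \<le> 1 * norm y" using assms by (intro mult_right_mono) auto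
  then have n: "norm (cnj a * y) < r^2" using assms by (simp add: norm_mult)
  have "r^2 < 1^2" using assms by (intro power_strict_mono) auto
  then have n2: "norm (cnj a * y) < 1" using n by simp
  show "complex_of_real (r^2) - cnj a * y \<noteq> 0"
  proof
    assume "complex_of_real (r^2) - cnj a * y = 0"
    then have "norm (cnj a * y) = norm (complex_of_real (r^2))" by simp
    then show False using n assms by (simp add: norm_power)
  qed
  show "1 - cnj a * y \<noteq> 0"
  proof
    assume "1 - cnj a * y = 0"
    then have "norm (cnj a * y) = norm (1::complex)" by simp
    then show False using n2 by simp
  qed
qed

lemma order_mult3:
  fixes p q u :: "'a::idom poly"
  shows "p*q \<noteq> 0 \<Longrightarrow> u \<noteq> 0 \<Longrightarrow> order y (p*q*u) = order y p + order y q + order y u"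
  by (simp add: order_mult)

lemma order_PP:
  assumes "\<forall>a\<in>set as. norm a < 1" "0 < norm y" "norm y < r^2" "0 < r" "r < 1"
  shows "order y (PP r as) = count (mset as) y"
  using assms(1)
proof (induction as)
  case Nil then show ?case by (simp add: PP_def)
next
  case (Cons a as)
  have e: "PP r (a#as) = [:-a, 1:] * [:complex_of_real (r^2), -cnj a:] * PP r as"
    by (simp add: PP_def pa_def)
  have nz: "PP r as \<noteq> 0" using assms PP_nz by auto
  have o2: "order y [:complex_of_real (r^2), -cnj a:] = 0"
    using small_nz(1)[of a y r] Cons assms(2-) by (intro order_0I) (simp add: algebra_simps)
  have "order y (PP r (a#as)) = order y [:-a, 1:] + order y [:complex_of_real (r^2), -cnj a:] + order y (PP r as)"
  proof -
    have n12: "[:-a, 1:] * [:complex_of_real (r^2), -cnj a:] \<noteq> 0" using pa_nz[of r a] assms by (simp add: pa_def)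
    show ?thesis unfolding e by (rule order_mult3[OF n12 nz])
  qed
  then show ?case using Cons o2 order_lin[of y a] by auto
qed

lemma order_QQ:
  assumes "\<forall>a\<in>set as. norm a < 1" "0 < norm y" "norm y < r^2" "0 < r" "r < 1"
  shows "order y (QQ r as) = count (mset as) (y / complex_of_real (r^2))"
  using assms(1)
proof (induction as)
  case Nil then show ?case by (simp add: QQ_def)
next
  case (Cons a as)
  have e: "QQ r (a#as) = [:1, -cnj a:] * [:-(a * complex_of_real (r^2)), 1:] * QQ r as"
    by (simp add: QQ_def qa_def)
  have nz: "QQ r as \<noteq> 0" using QQ_nz by auto
  have o2: "order y [:1, -cnj a:] = 0"
    using small_nz(2)[of a y r] Cons assms(2-) by (intro order_0I) (simp add: algebra_simps)
  have "order y (QQ r (a#as)) = order y [:1, -cnj a:] + order y [:-(a * complex_of_real (r^2)), 1:] + order y (QQ r as)"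
  proof -
    have n12: "[:1, -cnj a:] * [:-(a * complex_of_real (r^2)), 1:] \<noteq> 0" using qa_nz'[of r a] by (simp add: qa_def)
    show ?thesis unfolding e by (rule order_mult3[OF n12 nz])
  qed
  moreover have "(y = a * complex_of_real (r^2)) = (a = y / complex_of_real (r^2))"
    using assms by (auto simp: field_simps)
  ultimately show ?case using Cons o2 order_lin[of y "a * complex_of_real (r^2)"] by auto
qed

lemma counts_eq:
  fixes A B :: "complex multiset" and R :: real
  assumes "\<forall>a\<in>#A. norm a < 1" "\<forall>a\<in>#B. norm a < 1" "0 < R" "R < 1"
    and eq: "\<And>y. 0 < norm y \<Longrightarrow> norm y < R \<Longrightarrow>
      count A y + count B (y / complex_of_real R) = count B y + count A (y / complex_of_real R)"
    and "x \<noteq> 0"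
  shows "count A x = count B x"
proof (rule ccontr)
  assume ne: "count A x \<noteq> count B x"
  define T where "T = {x \<in> set_mset A \<union> set_mset B. x \<noteq> 0 \<and> count A x \<noteq> count B x}"
  have fin: "finite T" unfolding T_def by auto
  have "x \<in># A \<or> x \<in># B" using ne by (metis count_inI)
  then have "x \<in> T" using ne assms(6) unfolding T_def by blast
  then have ne2: "T \<noteq> {}" by auto
  define m where "m = arg_min_on norm T"
  have mT: "m \<in> T" and mmin: "\<not>(\<exists>u\<in>T. norm u < norm m)"
    using arg_min_if_finite[OF fin ne2, of norm] unfolding m_def by auto
  have m1: "norm m < 1" "m \<noteq> 0" and mc: "count A m \<noteq> count B m"
    using mT assms(1,2) unfolding T_def by auto
  define y where "y = complex_of_real R * m"
  have ny: "norm y = R * norm m" unfolding y_def using assms by (simp add: norm_mult)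
  have "R * norm m < R * 1" using m1 assms by (intro mult_strict_left_mono) auto
  moreover have "0 < R * norm m" using m1 assms by simp
  ultimately have y1: "0 < norm y" "norm y < R" using ny by auto
  have ym: "y / complex_of_real R = m" unfolding y_def using assms by simp
  have "count A y \<noteq> count B y" using eq[OF y1] mc ym by auto
  then have "y \<in># A \<or> y \<in># B" by (metis count_inI)
  then have "y \<in> T" unfolding T_def using y1 \<open>count A y \<noteq> count B y\<close> by auto
  moreover have "norm y < norm m"
  proof -
    have "R * norm m < 1 * norm m" using m1 assms by (intro mult_strict_right_mono) auto
    then show ?thesis using ny by simp
  qed
  ultimately show False using mmin by auto
qed

lemma prod_split0:
  fixes f :: "complex \<Rightarrow> complex"
  shows "(\<Prod>a\<leftarrow>as. f a) = prod_mset (image_mset f (filter_mset (\<lambda>x. x \<noteq> 0) (mset as))) * f 0 ^ count (mset as) 0"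
proof -
  have m: "mset as = filter_mset (\<lambda>x. x \<noteq> 0) (mset as) + replicate_mset (count (mset as) 0) 0"
    by (rule multiset_eqI) auto
  have "(\<Prod>a\<leftarrow>as. f a) = prod_mset (image_mset f (mset as))"
    by (metis mset_map prod_mset_prod_list)
  also have "\<dots> = prod_mset (image_mset f (filter_mset (\<lambda>x. x \<noteq> 0) (mset as))) * f 0 ^ count (mset as) 0"
    by (subst m) simp
  finally show ?thesis .
qed

theorem theorem2p11:
  fixes B1 B2 :: "complex \<Rightarrow> complex" and M N :: nat and r :: real
    and S :: "complex set"
  assumes "is_blaschke M B1" and "is_blaschke N B2"
    and "0 < r" and "r < 1"
    and "S \<subseteq> sphere 0 r" and "finite S"
    and "int (card S) > 2 * int N + 2 * int M - 1"
    and "\<forall>z\<in>S. norm (B1 z) = norm (B2 z)"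
  shows "\<exists>c::complex. \<forall>z\<in>ball 0 1. B2 z = c * B1 z"
proof -
  obtain c1 A where c1: "norm c1 = 1" "length A = M" "\<forall>a\<in>set A. norm a < 1" "B1 = blaschke c1 A"
    using assms(1) unfolding is_blaschke_def by blast
  obtain c2 Bl where c2: "norm c2 = 1" "length Bl = N" "\<forall>a\<in>set Bl. norm a < 1" "B2 = blaschke c2 Bl"
    using assms(2) unfolding is_blaschke_def by blast
  have cardS: "card S \<ge> 2*M + 2*N" using assms(7) by linarith
  have dA: "degree (PP r A) \<le> 2 * M" "coeff (PP r A) (2*M) = (\<Prod>a\<leftarrow>A. - cnj a)"
           "degree (QQ r A) \<le> 2 * M" "coeff (QQ r A) (2*M) = (\<Prod>a\<leftarrow>A. - cnj a)"
    using PP_deg[of r A] QQ_deg[of r A] c1 by auto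
  have dB: "degree (PP r Bl) \<le> 2 * N" "coeff (PP r Bl) (2*N) = (\<Prod>a\<leftarrow>Bl. - cnj a)"
           "degree (QQ r Bl) \<le> 2 * N" "coeff (QQ r Bl) (2*N) = (\<Prod>a\<leftarrow>Bl. - cnj a)"
    using PP_deg[of r Bl] QQ_deg[of r Bl] c2 by auto
  have polyeq: "PP r A * QQ r Bl = PP r Bl * QQ r A"
  proof (rule poly_eqI_degree_lead_coeff[where n = "2*M + 2*N" and A = S])
    show "coeff (PP r A * QQ r Bl) (2*M + 2*N) = coeff (PP r Bl * QQ r A) (2*M + 2*N)"
      using coeff_mult_bound[OF dA(1) dB(3)] coeff_mult_bound[OF dB(1) dA(3)] dA dB
      by (simp add: add.commute mult.commute)
    show "2*M + 2*N \<le> card S" using cardS .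
    show "degree (PP r A * QQ r Bl) \<le> 2*M + 2*N"
      using dA dB by (meson add_mono degree_mult_le order_trans)
    show "degree (PP r Bl * QQ r A) \<le> 2*M + 2*N"
      using dA dB by (metis add.commute add_mono degree_mult_le order_trans)
    fix z assume "z \<in> S"
    then have zr: "norm z = r" using assms(5) by auto
    have hA: "complex_of_real ((norm (B1 z))^2) = poly (PP r A) z / poly (QQ r A) z \<and> poly (QQ r A) z \<noteq> 0"
      using blaschke_norm[OF zr assms(3,4) c1(3) c1(1)] c1(4) by simp
    have hB: "complex_of_real ((norm (B2 z))^2) = poly (PP r Bl) z / poly (QQ r Bl) z \<and> poly (QQ r Bl) z \<noteq> 0"
      using blaschke_norm[OF zr assms(3,4) c2(3) c2(1)] c2(4) by simp
    have "poly (PP r A) z / poly (QQ r A) z = poly (PP r Bl) z / poly (QQ r Bl) z"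
      using hA hB assms(8) \<open>z\<in>S\<close> by metis
    then show "poly (PP r A * QQ r Bl) z = poly (PP r Bl * QQ r A) z"
      using hA hB by (simp add: field_simps)
  qed
  have nzA: "PP r A * QQ r Bl \<noteq> 0" using PP_nz QQ_nz assms(3) by simp
  have nzB: "PP r Bl * QQ r A \<noteq> 0" using PP_nz QQ_nz assms(3) by simp
  have r2: "0 < r^2" "r^2 < 1" using assms(3,4) by (auto simp: power_less_one_iff)
  have cnt: "count (mset A) x = count (mset Bl) x" if "x \<noteq> 0" for x
  proof (rule counts_eq[OF _ _ r2 _ that])
    show "\<forall>a\<in>#mset A. norm a < 1" "\<forall>a\<in>#mset Bl. norm a < 1" using c1 c2 by auto
    fix y :: complex assume y: "0 < norm y" "norm y < r^2"
    have "order y (PP r A * QQ r Bl) = order y (PP r Bl * QQ r A)" using polyeq by simp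
    then show "count (mset A) y + count (mset Bl) (y / complex_of_real (r^2)) =
          count (mset Bl) y + count (mset A) (y / complex_of_real (r^2))"
      using order_mult[OF nzA, of y] order_mult[OF nzB, of y]
        order_PP[OF c1(3) y assms(3,4)] order_QQ[OF c1(3) y assms(3,4)]
        order_PP[OF c2(3) y assms(3,4)] order_QQ[OF c2(3) y assms(3,4)] by simp
  qed
  define A' where "A' = filter_mset (\<lambda>x. x \<noteq> 0) (mset A)"
  have A'B: "A' = filter_mset (\<lambda>x. x \<noteq> 0) (mset Bl)"
    unfolding A'_def by (rule multiset_eqI) (simp add: cnt)
  define k where "k = count (mset A) 0"
  define l where "l = count (mset Bl) 0"
  define G where "G z = prod_mset (image_mset (\<lambda>a. (z-a)/(1 - cnj a * z)) A')" for z
  have fB1: "B1 z = c1 * (G z * z ^ k)" for z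
    unfolding c1(4) blaschke_def G_def A'_def k_def by (subst prod_split0) simp
  have fB2: "B2 z = c2 * (G z * z ^ l)" for z
    unfolding c2(4) blaschke_def G_def A'B l_def by (subst prod_split0) simp
  have "k = l"
  proof (rule ccontr)
    assume kl: "k \<noteq> l"
    have "k \<le> M" "l \<le> N" unfolding k_def l_def using c1(2) c2(2)
      by (metis count_le_size size_mset)+
    then have MN: "M + N > 0" using kl by auto
    have "card (set_mset A') \<le> M"
    proof -
      have "set_mset A' \<subseteq> set A" unfolding A'_def by auto
      then have "card (set_mset A') \<le> card (set A)" by (intro card_mono) auto
      then show ?thesis using card_length[of A] c1(2) by simp
    qed
    then have "card (set_mset A') < card S" using cardS MN by linarith
    then have "\<not> S \<subseteq> set_mset A'" by (metis card_mono finite_set_mset not_le)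
    then obtain z where z: "z \<in> S" "z \<notin># A'" by auto
    then have zr: "norm z = r" using assms(5) by auto
    have Gnz: "G z \<noteq> 0"
    proof
      assume "G z = 0"
      then obtain a where a: "a \<in># A'" "(z-a)/(1 - cnj a * z) = 0" unfolding G_def by auto
      have "norm a < 1" using a(1) c1(3) unfolding A'_def by auto
      have "norm a * r < 1 * 1" using \<open>norm a < 1\<close> assms(3,4) by (intro mult_strict_mono') auto
      then have "norm (cnj a * z) < 1" using zr by (simp add: norm_mult)
      then have "1 - cnj a * z \<noteq> 0" by auto
      moreover have "z - a \<noteq> 0" using a(1) z(2) by auto
      ultimately show False using a(2) by simp
    qed
    have "norm (B1 z) = norm (B2 z)" using assms(8) z(1) by auto
    then have "norm (G z) * r ^ k = norm (G z) * r ^ l"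
      unfolding fB1 fB2 using c1(1) c2(1) zr by (simp add: norm_mult norm_power)
    then have "r ^ k = r ^ l" using Gnz by simp
    then show False using kl assms(3,4)
      by (metis linorder_neqE_nat power_strict_decreasing_iff less_irrefl)
  qed
  show ?thesis
  proof (intro exI ballI)
    fix z :: complex
    show "B2 z = (c2 / c1) * B1 z" unfolding fB1 fB2 using c1(1) \<open>k = l\<close> by auto
  qed
qed

end
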